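(* Let $n \geq 3$ be an integer and let $\ell$ be an odd positive integer. Then $B_n[\ell]/B_n[4\ell] \cong B_n/B_n[4]$.
   Context: $B_n$ denotes the braid group on $n$ strands with standard Artin generators $\sigma_1,\dots,\sigma_{n-1}$. The reduced integral Burau representation $\rho_{-1}: B_n \to GL(n-1,\mathbb{Z})$ is defined on generators by $\rho_{-1}(\sigma_1)=\begin{pmatrix}1&0\\1&1\end{pmatrix}\oplus \mathrm{Id}_{n-3}$, $\rho_{-1}(\sigma_{n-1})=\mathrm{Id}_{n-3}\oplus\begin{pmatrix}1&-1\\0&1\end{pmatrix}$, and for $1<i<n-1$, $\rho_{-1}(\sigma_i)=\mathrm{Id}_{i-2}\oplus\begin{pmatrix}1&-1&0\\0&1&0\\0&1&1\end{pmatrix}\oplus \mathrm{Id}_{n-i-2}$, where $\oplus$ denotes block-diagonal sum. For a positive integer $\ell$, let $r_\ell: GL(n-1,\mathbb{Z})\to GL(n-1,\mathbb{Z}/\ell\mathbb{Z})$ be entrywise reduction mod $\ell$. The level $\ell$ congruence subgroup of the braid group is $B_n[\ell] := \ker(r_\ell\circ\rho_{-1})$. *)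

theory Defs
  imports "HOL-Algebra.Coset" "Jordan_Normal_Form.Matrix"
begin

text \<open>Braid group B_n via its Artin presentation. A letter (i, True) stands for
  sigma_i and (i, False) for sigma_i inverse, 1 <= i <= n-1.\<close>

definition letters :: "nat \<Rightarrow> (nat \<times> bool) set" where
  "letters n = {(i, e). 1 \<le> i \<and> i < n}"

inductive_set braid_eq :: "nat \<Rightarrow> ((nat \<times> bool) list \<times> (nat \<times> bool) list) set"
  for n :: nat where
  refl: "w \<in> lists (letters n) \<Longrightarrow> (w, w) \<in> braid_eq n"
| sym: "(u, v) \<in> braid_eq n \<Longrightarrow> (v, u) \<in> braid_eq n"
| trans: "(u, v) \<in> braid_eq n \<Longrightarrow> (v, w) \<in> braid_eq n \<Longrightarrow> (u, w) \<in> braid_eq n"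
| ctx: "(u, v) \<in> braid_eq n \<Longrightarrow> a \<in> lists (letters n) \<Longrightarrow> b \<in> lists (letters n)
         \<Longrightarrow> (a @ u @ b, a @ v @ b) \<in> braid_eq n"
| cancel: "(i, e) \<in> letters n \<Longrightarrow> ([(i, e), (i, \<not> e)], []) \<in> braid_eq n"
| commute: "(i, True) \<in> letters n \<Longrightarrow> (j, True) \<in> letters n \<Longrightarrow> i + 2 \<le> j
         \<Longrightarrow> ([(i, True), (j, True)], [(j, True), (i, True)]) \<in> braid_eq n"
| braid: "(i, True) \<in> letters n \<Longrightarrow> (Suc i, True) \<in> letters n
         \<Longrightarrow> ([(i, True), (Suc i, True), (i, True)], [(Suc i, True), (i, True), (Suc i, True)])
             \<in> braid_eq n"

definition braid_group :: "nat \<Rightarrow> (nat \<times> bool) list set monoid" where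
  "braid_group n = \<lparr> partial_object.carrier = lists (letters n) // braid_eq n,
     monoid.mult = (\<lambda>A B. braid_eq n `` {(SOME u. u \<in> A) @ (SOME v. v \<in> B)}),
     monoid.one = braid_eq n `` {[]} \<rparr>"

text \<open>Reduced integral Burau representation at t = -1 (0-based matrix indices).
  rho(sigma_i) = I + N_i with N_i having -1 at (i-2, i-1) and 1 at (i, i-1) when in range;
  N_i^2 = 0, so rho(sigma_i^{-1}) = I - N_i.\<close>

definition burau_gen :: "nat \<Rightarrow> nat \<Rightarrow> bool \<Rightarrow> int mat" where
  "burau_gen n i e = mat (n - 1) (n - 1) (\<lambda>(r, c).
      if r = c then 1
      else if r + 2 = i \<and> c + 1 = i then (if e then -1 else 1)
      else if r = i \<and> c + 1 = i then (if e then 1 else -1)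
      else 0)"

definition burau_word :: "nat \<Rightarrow> (nat \<times> bool) list \<Rightarrow> int mat" where
  "burau_word n w = foldr (\<lambda>(i, e) M. burau_gen n i e * M) w (1\<^sub>m (n - 1))"

definition mod_mat :: "nat \<Rightarrow> int mat \<Rightarrow> int mat" where
  "mod_mat l M = map_mat (\<lambda>a. a mod int l) M"

definition braid_cong :: "nat \<Rightarrow> nat \<Rightarrow> (nat \<times> bool) list set set" where
  "braid_cong n l = {x \<in> carrier (braid_group n).
      \<forall>w \<in> x. mod_mat l (burau_word n w) = mod_mat l (1\<^sub>m (n - 1))}"

end

theory Submission
  imports Defs
begin


definition gk :: "nat \<Rightarrow> nat \<Rightarrow> int \<Rightarrow> int mat" where
 "gk n k t = mat (n-1) (n-1) (\<lambda>(r,c). if r = c then 1 else if Suc r = k \<and> c = k then -t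
     else if r = Suc k \<and> c = k then t else 0)"

lemma gk_carrier[simp]: "gk n k t \<in> carrier_mat (n-1) (n-1)"
  by (simp add: gk_def)

lemma gk_dims[simp]: "dim_row (gk n k t) = n - 1" "dim_col (gk n k t) = n - 1"
  by (simp_all add: gk_def)

lemma gk_index: "r < n-1 \<Longrightarrow> c < n-1 \<Longrightarrow> gk n k t $$ (r,c) = (if r = c then 1 else if Suc r = k \<and> c = k then -t
     else if r = Suc k \<and> c = k then t else 0)"
  by (simp add: gk_def)

lemma burau_gen_gk: "burau_gen n (Suc k) e = gk n k (if e then 1 else -1)"
  by (auto simp: burau_gen_def gk_def)

lemma sum_delta_cond: "(\<Sum>k\<in>{0..<N::nat}. if P then (if k = a then f k else 0) else 0) = (if P \<and> a < N then f a else (0::int))"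
proof (cases P)
  case True
  have "(\<Sum>k\<in>{0..<N}. if k = a then f k else 0) = (if a \<in> {0..<N} then f a else 0)"
    by (rule sum.delta) simp
  then show ?thesis using True by simp
qed simp

lemma gk_mult_index:
  assumes M: "dim_row M = n-1" and r: "r < n-1" and c: "c < dim_col M" and k: "k < n-1"
  shows "(gk n k t * M) $$ (r,c) = M $$ (r,c)
     + (if Suc r = k then - t * M $$ (k,c) else 0)
     + (if r = Suc k then t * M $$ (k,c) else 0)"
proof -
  have "(gk n k t * M) $$ (r,c) = (\<Sum>j \<in> {0..<n-1}. gk n k t $$ (r,j) * M $$ (j,c))"
    using M r c by (simp add: gk_def scalar_prod_def)
  also have "\<dots> = (\<Sum>j\<in>{0..<n-1}. (if j = r then M$$(j,c) else 0)
       + (if Suc r = k then (if j = k then -t*M$$(j,c) else 0) else 0)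
       + (if r = Suc k then (if j = k then t*M$$(j,c) else 0) else 0))"
  proof (rule sum.cong)
    fix j assume "j \<in> {0..<n-1}"
    then show "gk n k t $$ (r,j) * M $$ (j,c) = (if j = r then M$$(j,c) else 0)
       + (if Suc r = k then (if j = k then -t*M$$(j,c) else 0) else 0)
       + (if r = Suc k then (if j = k then t*M$$(j,c) else 0) else 0)"
      using r by (simp add: gk_index)
  qed simp
  also have "\<dots> = M $$ (r,c)
     + (if Suc r = k then - t * M $$ (k,c) else 0)
     + (if r = Suc k then t * M $$ (k,c) else 0)"
    using r k by (auto simp add: sum.distrib sum_delta_cond)
  finally show ?thesis .
qed

lemma gk_mult: "k < n - 1 \<Longrightarrow> gk n k s * gk n k t = gk n k (s+t)"
  by (rule eq_matI) (auto simp del: index_mult_mat(1) simp add: gk_mult_index gk_index)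

lemma commute_gk: assumes "Suc a < b" "b < n - 1"
  shows "gk n a s * gk n b t = gk n b t * gk n a s"
proof (rule eq_matI)
  fix r c assume "r < dim_row (gk n b t * gk n a s)" "c < dim_col (gk n b t * gk n a s)"
  then have rc: "r < n-1" "c < n-1" by auto
  show "(gk n a s * gk n b t) $$ (r,c) = (gk n b t * gk n a s) $$ (r,c)"
    using rc assms
    by (simp add: gk_mult_index gk_index del: index_mult_mat(1))
qed auto

lemma braid_gk: assumes "Suc a < n - 1"
  shows "gk n a 1 * (gk n (Suc a) 1 * gk n a 1) = gk n (Suc a) 1 * (gk n a 1 * gk n (Suc a) 1)"
proof (rule eq_matI)
  fix r c assume "r < dim_row (gk n (Suc a) 1 * (gk n a 1 * gk n (Suc a) 1))" "c < dim_col (gk n (Suc a) 1 * (gk n a 1 * gk n (Suc a) 1))"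
  then have rc: "r < n-1" "c < n-1" by auto
  show "(gk n a 1 * (gk n (Suc a) 1 * gk n a 1)) $$ (r,c) = (gk n (Suc a) 1 * (gk n a 1 * gk n (Suc a) 1)) $$ (r,c)"
    using rc assms
    by (simp add: gk_mult_index gk_index del: index_mult_mat(1))
qed auto


lemma gk_0: "gk n k 0 = 1\<^sub>m (n-1)"
  by (auto simp: gk_def)

lemma burau_word_Cons: "burau_word n ((i,e)#w) = burau_gen n i e * burau_word n w"
  by (simp add: burau_word_def)

lemma burau_word_Nil: "burau_word n [] = 1\<^sub>m (n-1)"
  by (simp add: burau_word_def)

lemma burau_gen_carrier[simp]: "burau_gen n i e \<in> carrier_mat (n-1) (n-1)"
  by (simp add: burau_gen_def)

lemma burau_word_carrier[simp]: "burau_word n w \<in> carrier_mat (n-1) (n-1)"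
proof (induction w)
  case Nil thus ?case by (simp add: burau_word_Nil)
next
  case (Cons x w)
  obtain i e where x: "x = (i,e)" by force
  show ?case unfolding x burau_word_Cons using Cons by (rule mult_carrier_mat[OF burau_gen_carrier])
qed

lemma burau_word_append: "burau_word n (u@v) = burau_word n u * burau_word n v"
proof (induction u)
  case Nil thus ?case using burau_word_carrier[of n v] by (simp add: burau_word_Nil)
next
  case (Cons x u)
  obtain i e where x: "x = (i,e)" by force
  have "burau_word n ((x#u)@v) = burau_gen n i e * (burau_word n u * burau_word n v)"
    using Cons by (simp add: x burau_word_Cons)
  also have "\<dots> = burau_word n (x#u) * burau_word n v"
    by (simp add: x burau_word_Cons assoc_mult_mat[OF burau_gen_carrier burau_word_carrier burau_word_carrier])
  finally show ?case .
qed

lemma letter_Suc: "(i,e) \<in> letters n \<Longrightarrow> \<exists>k. i = Suc k \<and> k < n - 1"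
  by (auto simp: letters_def intro!: exI[of _ "i - 1"])

lemma burau_invariant: "(u,v) \<in> braid_eq n \<Longrightarrow> burau_word n u = burau_word n v"
proof (induction rule: braid_eq.induct)
  case (ctx u v a b)
  then show ?case by (simp add: burau_word_append)
next
  case (cancel i e)
  then obtain k where k: "i = Suc k" "k < n - 1" using letter_Suc by blast
  then show ?case
    by (simp add: burau_word_Cons burau_word_Nil burau_gen_gk gk_mult gk_0)
next
  case (commute i j)
  then obtain a where a: "i = Suc a" "a < n - 1" using letter_Suc by blast
  from commute obtain b where b: "j = Suc b" "b < n - 1" using letter_Suc by blast
  have "Suc a < b" using a b commute by simp
  then show ?case using a b commute_gk[of a b n 1 1]
    by (simp add: burau_word_Cons burau_word_Nil burau_gen_gk)
next
  case (braid i)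
  then obtain a where a: "i = Suc a" "a < n - 1" using letter_Suc by blast
  from braid obtain b where b: "Suc i = Suc b" "b < n - 1" using letter_Suc by blast
  have "Suc a < n - 1" using a b by simp
  then show ?case using a
    by (simp add: burau_word_Cons burau_word_Nil burau_gen_gk braid_gk)
qed simp_all

lemma mod_mat_mult:
  assumes A: "A \<in> carrier_mat a b" and B: "B \<in> carrier_mat b c"
  shows "mod_mat m (A * B) = mod_mat m (mod_mat m A * mod_mat m B)"
proof (rule eq_matI)
  fix r j assume "r < dim_row (mod_mat m (mod_mat m A * mod_mat m B))" "j < dim_col (mod_mat m (mod_mat m A * mod_mat m B))"
  then have rj: "r < a" "j < c" using A B by (auto simp: mod_mat_def)
  have "(\<Sum>k\<in>{0..<b}. A $$ (r,k) * B $$ (k,j)) mod int m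
      = (\<Sum>k\<in>{0..<b}. (A $$ (r,k) mod int m) * (B $$ (k,j) mod int m)) mod int m"
  proof -
    have "(\<Sum>k\<in>{0..<b}. (A $$ (r,k) mod int m) * (B $$ (k,j) mod int m)) mod int m
       = (\<Sum>k\<in>{0..<b}. ((A $$ (r,k) mod int m) * (B $$ (k,j) mod int m)) mod int m) mod int m"
      by (simp add: mod_sum_eq)
    also have "\<dots> = (\<Sum>k\<in>{0..<b}. (A $$ (r,k) * B $$ (k,j)) mod int m) mod int m"
      by (simp add: mod_mult_eq)
    also have "\<dots> = (\<Sum>k\<in>{0..<b}. A $$ (r,k) * B $$ (k,j)) mod int m"
      by (simp add: mod_sum_eq)
    finally show ?thesis by simp
  qed
  then show "mod_mat m (A * B) $$ (r, j) = mod_mat m (mod_mat m A * mod_mat m B) $$ (r, j)"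
    using A B rj by (simp add: mod_mat_def scalar_prod_def)
qed (use A B in \<open>auto simp: mod_mat_def\<close>)

definition wc :: "nat \<Rightarrow> nat \<Rightarrow> (nat \<times> bool) list \<Rightarrow> (nat \<times> bool) list \<Rightarrow> bool" where
  "wc n m u v \<longleftrightarrow> mod_mat m (burau_word n u) = mod_mat m (burau_word n v)"

lemma wc_append: "wc n m u u' \<Longrightarrow> wc n m v v' \<Longrightarrow> wc n m (u@v) (u'@v')"
  unfolding wc_def burau_word_append
  by (metis mod_mat_mult burau_word_carrier)

lemma gk_mod: assumes "t mod int m = t' mod int m"
  shows "mod_mat m (gk n k t) = mod_mat m (gk n k t')"
  using assms mod_minus_cong[OF assms]
  by (intro eq_matI) (auto simp: mod_mat_def gk_index)

lemma burau_replicate: "k < n - 1 \<Longrightarrow> burau_word n (replicate q (Suc k, e)) = gk n k (int q * (if e then 1 else -1))"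
proof (induction q)
  case 0 thus ?case by (simp add: burau_word_Nil gk_0)
next
  case (Suc q)
  then show ?case by (simp add: burau_word_Cons burau_gen_gk gk_mult algebra_simps)
qed



definition cls :: "nat \<Rightarrow> (nat \<times> bool) list \<Rightarrow> (nat \<times> bool) list set" where
  "cls n w = braid_eq n `` {w}"

lemma be_lists: "(u,v) \<in> braid_eq n \<Longrightarrow> u \<in> lists (letters n) \<and> v \<in> lists (letters n)"
  by (induction rule: braid_eq.induct) (auto simp: letters_def)

lemma equiv_be: "equiv (lists (letters n)) (braid_eq n)"
  apply (rule equivI)
    apply (force dest: be_lists)
    apply (rule refl_onI, erule braid_eq.refl)
   apply (rule symI, erule braid_eq.sym)
  apply (rule transI, erule (1) braid_eq.trans)
  done

lemma be_append: assumes 1: "(u,u') \<in> braid_eq n" and 2: "(v,v') \<in> braid_eq n"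
  shows "(u@v, u'@v') \<in> braid_eq n"
proof -
  have "([]@u@v, []@u'@v) \<in> braid_eq n" using 1 2 be_lists by (intro braid_eq.ctx) auto
  moreover have "(u'@v@[], u'@v'@[]) \<in> braid_eq n" using 1 2 be_lists by (intro braid_eq.ctx) auto
  ultimately show ?thesis using braid_eq.trans by fastforce
qed

lemma cls_eq: "(u,v) \<in> braid_eq n \<Longrightarrow> cls n u = cls n v"
  unfolding cls_def by (rule equiv_class_eq[OF equiv_be])

lemma cls_self: "w \<in> lists (letters n) \<Longrightarrow> w \<in> cls n w"
  unfolding cls_def by (rule equiv_class_self[OF equiv_be])

lemma mem_cls: "v \<in> cls n w \<Longrightarrow> (w,v) \<in> braid_eq n"
  by (simp add: cls_def)

lemma carrier_BG: "carrier (braid_group n) = lists (letters n) // braid_eq n"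
  by (simp add: braid_group_def)

lemma carrier_cls: "x \<in> carrier (braid_group n) \<Longrightarrow> \<exists>w \<in> lists (letters n). x = cls n w"
  unfolding carrier_BG cls_def by (erule quotientE) blast

lemma cls_carrier: "w \<in> lists (letters n) \<Longrightarrow> cls n w \<in> carrier (braid_group n)"
  unfolding carrier_BG cls_def by (rule quotientI)

lemma one_BG: "one (braid_group n) = cls n []"
  by (simp add: braid_group_def cls_def)

lemma mult_cls: assumes u: "u \<in> lists (letters n)" and v: "v \<in> lists (letters n)"
  shows "cls n u \<otimes>\<^bsub>braid_group n\<^esub> cls n v = cls n (u@v)"
proof -
  let ?a = "SOME a. a \<in> cls n u" and ?b = "SOME b. b \<in> cls n v"
  have a: "?a \<in> cls n u" by (rule someI[of _ u]) (rule cls_self[OF u])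
  have b: "?b \<in> cls n v" by (rule someI[of _ v]) (rule cls_self[OF v])
  have "(u@v, ?a@?b) \<in> braid_eq n" using a b mem_cls be_append by blast
  then have "cls n (?a@?b) = cls n (u@v)" using cls_eq braid_eq.sym by metis
  then show ?thesis by (simp add: braid_group_def cls_def)
qed

definition iw :: "(nat \<times> bool) list \<Rightarrow> (nat \<times> bool) list" where
  "iw w = rev (map (\<lambda>(i,e). (i, \<not>e)) w)"

lemma iw_lists: "w \<in> lists (letters n) \<Longrightarrow> iw w \<in> lists (letters n)"
  by (auto simp: iw_def letters_def)

lemma iw_iw: "iw (iw w) = w"
  by (induction w) (auto simp: iw_def)

lemma w_iw: "w \<in> lists (letters n) \<Longrightarrow> (w @ iw w, []) \<in> braid_eq n"
proof (induction w)
  case Nil thus ?case by (simp add: iw_def braid_eq.refl)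
next
  case (Cons x w)
  obtain i e where x: "x = (i,e)" by force
  have xl: "(i,e) \<in> letters n" "(i, \<not>e) \<in> letters n" using Cons x by (auto simp: letters_def)
  have "([(i,e)] @ (w @ iw w) @ [(i,\<not>e)], [(i,e)] @ [] @ [(i,\<not>e)]) \<in> braid_eq n"
    using Cons xl by (intro braid_eq.ctx) auto
  moreover have "([(i,e),(i,\<not>e)], []) \<in> braid_eq n" using xl(1) by (rule braid_eq.cancel)
  ultimately show ?case using braid_eq.trans by (fastforce simp: x iw_def)
qed

lemma iw_w: "w \<in> lists (letters n) \<Longrightarrow> (iw w @ w, []) \<in> braid_eq n"
  using w_iw[OF iw_lists, of w n] by (simp add: iw_iw)

lemma carrier_obtain: assumes "x \<in> carrier (braid_group n)"
  obtains w where "w \<in> lists (letters n)" "x = cls n w"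
  using carrier_cls[OF assms] by blast

lemma group_BG: "group (braid_group n)"
proof (rule groupI)
  fix x y assume x: "x \<in> carrier (braid_group n)" and y: "y \<in> carrier (braid_group n)"
  obtain u where u: "u \<in> lists (letters n)" "x = cls n u" by (rule carrier_obtain[OF x])
  obtain v where v: "v \<in> lists (letters n)" "y = cls n v" by (rule carrier_obtain[OF y])
  show "x \<otimes>\<^bsub>braid_group n\<^esub> y \<in> carrier (braid_group n)"
    unfolding u v mult_cls[OF u(1) v(1)] using u v by (intro cls_carrier) simp
next
  show "\<one>\<^bsub>braid_group n\<^esub> \<in> carrier (braid_group n)" unfolding one_BG by (rule cls_carrier) simp
next
  fix x y z assume x: "x \<in> carrier (braid_group n)" and y: "y \<in> carrier (braid_group n)"
    and z: "z \<in> carrier (braid_group n)"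
  obtain u where u: "u \<in> lists (letters n)" "x = cls n u" by (rule carrier_obtain[OF x])
  obtain v where v: "v \<in> lists (letters n)" "y = cls n v" by (rule carrier_obtain[OF y])
  obtain w where w: "w \<in> lists (letters n)" "z = cls n w" by (rule carrier_obtain[OF z])
  have uv: "u @ v \<in> lists (letters n)" "v @ w \<in> lists (letters n)" using u v w by auto
  show "x \<otimes>\<^bsub>braid_group n\<^esub> y \<otimes>\<^bsub>braid_group n\<^esub> z =
         x \<otimes>\<^bsub>braid_group n\<^esub> (y \<otimes>\<^bsub>braid_group n\<^esub> z)"
    unfolding u v w mult_cls[OF u(1) v(1)] mult_cls[OF v(1) w(1)] mult_cls[OF uv(1) w(1)]
      mult_cls[OF u(1) uv(2)] by simp
next
  fix x assume x: "x \<in> carrier (braid_group n)"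
  obtain u where u: "u \<in> lists (letters n)" "x = cls n u" by (rule carrier_obtain[OF x])
  show "\<one>\<^bsub>braid_group n\<^esub> \<otimes>\<^bsub>braid_group n\<^esub> x = x"
    unfolding u one_BG using mult_cls[OF _ u(1), of "[]"] by simp
next
  fix x assume x: "x \<in> carrier (braid_group n)"
  obtain w where w: "w \<in> lists (letters n)" "x = cls n w" by (rule carrier_obtain[OF x])
  have iwl: "iw w \<in> lists (letters n)" using w(1) by (rule iw_lists)
  have "cls n (iw w) \<otimes>\<^bsub>braid_group n\<^esub> x = \<one>\<^bsub>braid_group n\<^esub>"
    unfolding w(2) one_BG mult_cls[OF iwl w(1)] by (rule cls_eq[OF iw_w[OF w(1)]])
  then show "\<exists>y\<in>carrier (braid_group n). y \<otimes>\<^bsub>braid_group n\<^esub> x = \<one>\<^bsub>braid_group n\<^esub>"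
    using cls_carrier[OF iwl] by blast
qed

lemma inv_cls: assumes w: "w \<in> lists (letters n)"
  shows "inv\<^bsub>braid_group n\<^esub> (cls n w) = cls n (iw w)"
proof -
  have iwl: "iw w \<in> lists (letters n)" using w by (rule iw_lists)
  show ?thesis
  proof (rule group.inv_equality[OF group_BG])
    show "cls n (iw w) \<otimes>\<^bsub>braid_group n\<^esub> cls n w = \<one>\<^bsub>braid_group n\<^esub>"
      unfolding one_BG mult_cls[OF iwl w] by (rule cls_eq[OF iw_w[OF w]])
  qed (use cls_carrier w iwl in auto)
qed

lemma cong_cls: assumes w: "w \<in> lists (letters n)"
  shows "cls n w \<in> braid_cong n m \<longleftrightarrow> wc n m w []"
proof
  assume "cls n w \<in> braid_cong n m"
  then have "\<forall>w'\<in>cls n w. mod_mat m (burau_word n w') = mod_mat m (1\<^sub>m (n - 1))"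
    by (simp add: braid_cong_def)
  then have "mod_mat m (burau_word n w) = mod_mat m (1\<^sub>m (n - 1))" using cls_self[OF w] by blast
  then show "wc n m w []" by (simp add: wc_def burau_word_Nil)
next
  assume wc: "wc n m w []"
  have "\<forall>w'\<in>cls n w. mod_mat m (burau_word n w') = mod_mat m (1\<^sub>m (n - 1))"
  proof
    fix w' assume "w' \<in> cls n w"
    then have "burau_word n w' = burau_word n w" using mem_cls burau_invariant by metis
    then show "mod_mat m (burau_word n w') = mod_mat m (1\<^sub>m (n - 1))"
      using wc by (simp add: wc_def burau_word_Nil)
  qed
  then show "cls n w \<in> braid_cong n m" using cls_carrier[OF w] by (simp add: braid_cong_def)
qed

lemma cong_sub: "braid_cong n m \<subseteq> carrier (braid_group n)"
  by (auto simp: braid_cong_def)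

lemma cong_obtain: assumes "a \<in> braid_cong n m"
  obtains w where "w \<in> lists (letters n)" "a = cls n w" "wc n m w []"
proof -
  obtain w where w: "w \<in> lists (letters n)" "a = cls n w" using assms cong_sub carrier_cls by blast
  then have "wc n m w []" using assms cong_cls by blast
  then show ?thesis using w that by blast
qed

lemma wc_sym: "wc n m u v \<Longrightarrow> wc n m v u" by (simp add: wc_def)
lemma wc_trans: "wc n m u v \<Longrightarrow> wc n m v w \<Longrightarrow> wc n m u w" by (simp add: wc_def)
lemma wc_refl: "wc n m u u" by (simp add: wc_def)
lemma wc_be: "(u,v) \<in> braid_eq n \<Longrightarrow> wc n m u v" by (simp add: wc_def burau_invariant)

lemma normal_cong: "braid_cong n m \<lhd> braid_group n"
proof -
  interpret BG: group "braid_group n" by (rule group_BG)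
  have sg: "subgroup (braid_cong n m) (braid_group n)"
  proof (rule BG.subgroupI)
    show "braid_cong n m \<subseteq> carrier (braid_group n)" by (rule cong_sub)
    have "cls n [] \<in> braid_cong n m" using cong_cls[of "[]" n m] wc_refl[of n m "[]"] by simp
    then show "braid_cong n m \<noteq> {}" by blast
  next
    fix a assume "a \<in> braid_cong n m"
    then obtain w where w: "w \<in> lists (letters n)" "a = cls n w" "wc n m w []"
      by (rule cong_obtain)
    have "wc n m (w @ iw w) ([] @ iw w)" using wc_append[OF w(3) wc_refl] .
    then have "wc n m (iw w) []" using wc_be[OF w_iw[OF w(1)], of m] unfolding wc_def by simp
    then show "inv\<^bsub>braid_group n\<^esub> a \<in> braid_cong n m"
      unfolding w(2) inv_cls[OF w(1)] cong_cls[OF iw_lists[OF w(1)]] .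
  next
    fix a b assume "a \<in> braid_cong n m" "b \<in> braid_cong n m"
    obtain u where u: "u \<in> lists (letters n)" "a = cls n u" "wc n m u []"
      by (rule cong_obtain[OF \<open>a \<in> braid_cong n m\<close>])
    obtain v where v: "v \<in> lists (letters n)" "b = cls n v" "wc n m v []"
      by (rule cong_obtain[OF \<open>b \<in> braid_cong n m\<close>])
    have uv: "u @ v \<in> lists (letters n)" using u v by simp
    show "a \<otimes>\<^bsub>braid_group n\<^esub> b \<in> braid_cong n m"
      unfolding u(2) v(2) mult_cls[OF u(1) v(1)] cong_cls[OF uv]
      using wc_append[OF u(3) v(3)] by simp
  qed
  show ?thesis
  proof (subst BG.normal_inv_iff, intro conjI sg ballI)
    fix x h assume "x \<in> carrier (braid_group n)" "h \<in> braid_cong n m"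
    obtain u where u: "u \<in> lists (letters n)" "x = cls n u"
      by (rule carrier_obtain[OF \<open>x \<in> carrier (braid_group n)\<close>])
    obtain w where w: "w \<in> lists (letters n)" "h = cls n w" "wc n m w []"
      by (rule cong_obtain[OF \<open>h \<in> braid_cong n m\<close>])
    have iwl: "iw u \<in> lists (letters n)" using u(1) by (rule iw_lists)
    have l1: "u @ w \<in> lists (letters n)" using u w by simp
    have "wc n m (u @ w @ iw u) (u @ [] @ iw u)" using wc_append[OF wc_refl wc_append[OF w(3) wc_refl]] .
    then have "wc n m ((u @ w) @ iw u) []" using wc_be[OF w_iw[OF u(1)], of m] unfolding wc_def by simp
    then have "cls n ((u @ w) @ iw u) \<in> braid_cong n m" using cong_cls[OF append_in_lists_conv[THEN iffD2, OF conjI[OF l1 iwl]]] by simp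
    then show "x \<otimes>\<^bsub>braid_group n\<^esub> h \<otimes>\<^bsub>braid_group n\<^esub> inv\<^bsub>braid_group n\<^esub> x \<in> braid_cong n m"
      unfolding u(2) w(2) inv_cls[OF u(1)] mult_cls[OF u(1) w(1)] mult_cls[OF l1 iwl] .
  qed
qed



lemma mod_mat_eq_iff: assumes "A \<in> carrier_mat N N" "B \<in> carrier_mat N N"
  shows "mod_mat m A = mod_mat m B \<longleftrightarrow> (\<forall>i<N. \<forall>j<N. A$$(i,j) mod int m = B$$(i,j) mod int m)"
proof
  assume h: "mod_mat m A = mod_mat m B"
  show "\<forall>i<N. \<forall>j<N. A$$(i,j) mod int m = B$$(i,j) mod int m"
  proof (intro allI impI)
    fix i j assume "i < N" "j < N"
    then show "A$$(i,j) mod int m = B$$(i,j) mod int m"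
      using arg_cong[OF h, of "\<lambda>M. M $$ (i,j)"] assms by (simp add: mod_mat_def)
  qed
next
  assume "\<forall>i<N. \<forall>j<N. A$$(i,j) mod int m = B$$(i,j) mod int m"
  then show "mod_mat m A = mod_mat m B" using assms by (intro eq_matI) (auto simp: mod_mat_def)
qed

lemma mod_coprime: assumes "coprime (a::int) b"
  shows "x mod (a*b) = y mod (a*b) \<longleftrightarrow> x mod a = y mod a \<and> x mod b = y mod b"
  using assms by (auto simp: mod_eq_dvd_iff intro: divides_mult dvd_mult_left dvd_mult_right)

lemma wc_mult: assumes "coprime (int a) (int b)"
  shows "wc n (a*b) u v \<longleftrightarrow> wc n a u v \<and> wc n b u v"
  unfolding wc_def
  using mod_mat_eq_iff[OF burau_word_carrier burau_word_carrier] mod_coprime[OF assms]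
  by (simp only: of_nat_mult) blast

lemma cong_inter: assumes "coprime (int a) (int b)"
  shows "braid_cong n (a*b) = braid_cong n a \<inter> braid_cong n b"
proof (rule Set.set_eqI)
  fix x show "x \<in> braid_cong n (a*b) \<longleftrightarrow> x \<in> braid_cong n a \<inter> braid_cong n b"
  proof (cases "x \<in> carrier (braid_group n)")
    case True
    then obtain w where w: "w \<in> lists (letters n)" "x = cls n w" by (rule carrier_obtain)
    show ?thesis unfolding w(2) using cong_cls[OF w(1)] wc_mult[OF assms] by simp
  next
    case False then show ?thesis using cong_sub by blast
  qed
qed

lemma wc_concat: "(\<And>x. x \<in> set w \<Longrightarrow> wc n m (f x) (g x)) \<Longrightarrow> wc n m (concat (map f w)) (concat (map g w))"
proof (induction w)
  case Nil then show ?case by (simp add: wc_refl)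
next
  case (Cons x w) then show ?case by (simp add: wc_append)
qed

lemma concat_empty: "concat (map (\<lambda>x. []) w) = []"
  by (induction w) auto

lemma concat_single: "concat (map (\<lambda>x. [x]) w) = w"
  by (induction w) auto

lemma rep_l: assumes "x \<in> letters n"
  shows "wc n l (replicate (l*l) x) []"
proof -
  obtain i e where x: "x = (i,e)" by force
  obtain k where k: "i = Suc k" "k < n - 1" using letter_Suc assms x by blast
  have "int (l*l) * (if e then 1 else -1) mod int l = 0 mod int l" by simp
  then show ?thesis
    unfolding wc_def x k burau_replicate[OF k(2)] burau_word_Nil using gk_mod gk_0 by metis
qed

lemma rep_4: assumes "x \<in> letters n" "odd l"
  shows "wc n 4 (replicate (l*l) x) [x]"
proof -
  obtain i e where x: "x = (i,e)" by force
  obtain k where k: "i = Suc k" "k < n - 1" using letter_Suc assms x by blast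
  obtain j where j: "l = 2*j+1" using assms(2) oddE by blast
  let ?s = "(if e then 1 else -1) :: int"
  have "int (l*l) * ?s = ?s + 4 * ((int j * int j + int j) * ?s)"
    unfolding j by (simp add: algebra_simps)
  then have "int (l*l) * ?s mod int 4 = ?s mod int 4" by simp
  then have "mod_mat 4 (gk n k (int (l*l) * ?s)) = mod_mat 4 (gk n k ?s)"
    by (rule gk_mod)
  moreover have "burau_word n [x] = gk n k ?s"
    unfolding x k burau_word_Cons burau_word_Nil burau_gen_gk by simp
  ultimately show ?thesis
    unfolding wc_def x k burau_replicate[OF k(2)] by simp
qed

theorem theorem3p3:
  fixes n l :: nat
  assumes "n \<ge> 3" and "odd l"
  shows "((braid_group n)\<lparr>carrier := braid_cong n l\<rparr> Mod braid_cong n (4 * l))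
           \<cong> (braid_group n Mod braid_cong n 4)"
proof -
  let ?B = "braid_group n" and ?K = "braid_cong n"
  interpret BG: group ?B by (rule group_BG)
  have n4: "?K 4 \<lhd> ?B" by (rule normal_cong)
  have nl: "?K l \<lhd> ?B" by (rule normal_cong)
  have sl: "subgroup (?K l) ?B" using nl by (rule normal.axioms(1))
  have s4: "subgroup (?K 4) ?B" using n4 by (rule normal.axioms(1))
  let ?G = "?B\<lparr>carrier := ?K l\<rparr>" and ?H = "?B Mod ?K 4" and ?h = "\<lambda>x. ?K 4 #>\<^bsub>?B\<^esub> x"
  have gG: "group ?G" by (rule subgroup.subgroup_is_group[OF sl group_BG])
  have gH: "group ?H" by (rule normal.factorgroup_is_group[OF n4])
  have hom0: "?h \<in> hom ?B ?H" by (rule normal.r_coset_hom_Mod[OF n4])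
  have hB1: "?h \<in> carrier ?B \<rightarrow> carrier ?H"
    and hB2: "\<forall>x\<in>carrier ?B. \<forall>y\<in>carrier ?B. ?h (x \<otimes>\<^bsub>?B\<^esub> y) = ?h x \<otimes>\<^bsub>?H\<^esub> ?h y"
    using hom0 unfolding hom_def by blast+
  have hom: "?h \<in> hom ?G ?H"
    unfolding hom_def
  proof (rule CollectI, rule conjI)
    show "?h \<in> carrier ?G \<rightarrow> carrier ?H"
    proof (rule Pi_I)
      fix x assume "x \<in> carrier ?G"
      then have "x \<in> carrier ?B" using cong_sub by auto
      then show "?h x \<in> carrier ?H" using hB1 by blast
    qed
    show "\<forall>x\<in>carrier ?G. \<forall>y\<in>carrier ?G. ?h (x \<otimes>\<^bsub>?G\<^esub> y) = ?h x \<otimes>\<^bsub>?H\<^esub> ?h y"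
    proof (intro ballI)
      fix x y assume "x \<in> carrier ?G" "y \<in> carrier ?G"
      then have "x \<in> carrier ?B" "y \<in> carrier ?B" using cong_sub by auto
      then have "?h (x \<otimes>\<^bsub>?B\<^esub> y) = ?h x \<otimes>\<^bsub>?H\<^esub> ?h y" using hB2 by blast
      then show "?h (x \<otimes>\<^bsub>?G\<^esub> y) = ?h x \<otimes>\<^bsub>?H\<^esub> ?h y" by simp
    qed
  qed
  have gh: "group_hom ?G ?H ?h" unfolding group_hom_def group_hom_axioms_def using gG gH hom by simp
  have cop: "coprime (int 4) (int l)"
  proof -
    have "coprime (2::int) (int l)" using assms(2) by simp
    then have "coprime (2*2::int) (int l)" by (metis coprime_mult_left_iff)
    moreover have "int 4 = (2*2::int)" by simp
    ultimately show ?thesis by metis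
  qed
  have ker: "kernel ?G ?H ?h = ?K (4*l)"
  proof -
    have "\<And>x. x \<in> ?K l \<Longrightarrow> (?K 4 #>\<^bsub>?B\<^esub> x = ?K 4) \<longleftrightarrow> x \<in> ?K 4"
    proof -
      fix x assume "x \<in> ?K l"
      then have xc: "x \<in> carrier ?B" using cong_sub by blast
      show "(?K 4 #>\<^bsub>?B\<^esub> x = ?K 4) \<longleftrightarrow> x \<in> ?K 4"
        using BG.rcos_self[OF xc s4] subgroup.rcos_const[OF s4 group_BG] by auto
    qed
    then have "kernel ?G ?H ?h = ?K l \<inter> ?K 4" by (auto simp: kernel_def FactGroup_def)
    also have "\<dots> = ?K (4*l)" using cong_inter[OF cop] by auto
    finally show ?thesis .
  qed
  have surj: "?h ` carrier ?G = carrier ?H"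
  proof
    show "?h ` carrier ?G \<subseteq> carrier ?H"
      using cong_sub subgroup.subset[OF s4] by (auto simp: FactGroup_def intro!: BG.rcosetsI)
  next
    show "carrier ?H \<subseteq> ?h ` carrier ?G"
    proof
      fix X assume "X \<in> carrier ?H"
      then obtain x where x: "x \<in> carrier ?B" "X = ?K 4 #>\<^bsub>?B\<^esub> x"
        by (auto simp: FactGroup_def RCOSETS_def)
      obtain w where w: "w \<in> lists (letters n)" "x = cls n w" using x(1) by (rule carrier_obtain)
      define w' where "w' = concat (map (\<lambda>x. replicate (l*l) x) w)"
      have w'l: "w' \<in> lists (letters n)" using w(1) unfolding w'_def by auto
      have "wc n l w' (concat (map (\<lambda>x. []) w))"
        unfolding w'_def using w(1) by (intro wc_concat rep_l) auto
      then have yl: "cls n w' \<in> ?K l" using cong_cls[OF w'l] by (simp add: concat_empty)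
      have "wc n 4 w' (concat (map (\<lambda>x. [x]) w))"
        unfolding w'_def using w(1) assms(2) by (intro wc_concat rep_4) auto
      then have "wc n 4 w' w" by (simp add: concat_single)
      then have "wc n 4 (w' @ iw w) (w @ iw w)" using wc_append wc_refl by blast
      then have "wc n 4 (w' @ iw w) []" using wc_be[OF w_iw[OF w(1)], of 4] unfolding wc_def by simp
      moreover have l2: "w' @ iw w \<in> lists (letters n)" using w'l iw_lists[OF w(1)] by simp
      ultimately have hk: "cls n (w' @ iw w) \<in> ?K 4" using cong_cls by blast
      have "(w' @ (iw w @ w), w' @ []) \<in> braid_eq n"
        by (rule be_append[OF braid_eq.refl[OF w'l] iw_w[OF w(1)]])
      then have "cls n (w' @ iw w) \<otimes>\<^bsub>?B\<^esub> x = cls n w'"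
        unfolding w(2) mult_cls[OF l2 w(1)] using cls_eq by simp
      then have "cls n w' \<in> ?K 4 #>\<^bsub>?B\<^esub> x" using hk unfolding r_coset_def by blast
      then have "?K 4 #>\<^bsub>?B\<^esub> x = ?K 4 #>\<^bsub>?B\<^esub> cls n w'"
        by (rule BG.repr_independence[OF _ x(1) s4])
      then show "X \<in> ?h ` carrier ?G" using x(2) yl by auto
    qed
  qed
  show ?thesis using group_hom.FactGroup_iso[OF gh surj] ker by simp
qed

end
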